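(* Let $G=(V,E)$ be an undirected graph (loops excluded, parallel edges allowed). An orientation of $G$ is decreasingly minimal if and only if it is increasingly maximal.
   Context: For an orientation $D$ of $G$, its in-degree vector is $m(v)=\varrho_D(v)$, the number of arcs of $D$ with head $v$. An orientation is decreasingly minimal (dec-min) if its in-degree vector is decreasingly minimal among in-degree vectors of all orientations of $G$: its largest component is as small as possible, within this its second largest is as small as possible, and so on. It is increasingly maximal (inc-max) if its in-degree vector has smallest component as large as possible, within this its second smallest component as large as possible, and so on. *)

theory Defs
  imports Main "HOL-Library.Multiset"
begin

text \<open>An undirected graph (loops excluded, parallel edges allowed) is given by a finite
vertex set V, a finite set E of edge names and a map ends assigning to each edge its two
(distinct) end-vertices.\<close>

definition graph :: "'v set \<Rightarrow> 'e set \<Rightarrow> ('e \<Rightarrow> 'v \<times> 'v) \<Rightarrow> bool" where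
  "graph V E ends \<longleftrightarrow> finite V \<and> finite E \<and>
     (\<forall>e\<in>E. fst (ends e) \<in> V \<and> snd (ends e) \<in> V \<and> fst (ends e) \<noteq> snd (ends e))"

text \<open>An orientation is given by choosing, for every edge, its head (one of its ends).\<close>

definition orientation :: "'e set \<Rightarrow> ('e \<Rightarrow> 'v \<times> 'v) \<Rightarrow> ('e \<Rightarrow> 'v) \<Rightarrow> bool" where
  "orientation E ends h \<longleftrightarrow> (\<forall>e\<in>E. h e = fst (ends e) \<or> h e = snd (ends e))"

definition indeg :: "'e set \<Rightarrow> ('e \<Rightarrow> 'v) \<Rightarrow> 'v \<Rightarrow> nat" where
  "indeg E h v = card {e\<in>E. h e = v}"

definition inc_sorted :: "'v set \<Rightarrow> ('v \<Rightarrow> nat) \<Rightarrow> nat list" where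
  "inc_sorted V m = sorted_list_of_multiset (image_mset m (mset_set V))"

definition dec_sorted :: "'v set \<Rightarrow> ('v \<Rightarrow> nat) \<Rightarrow> nat list" where
  "dec_sorted V m = rev (inc_sorted V m)"

definition lex_less :: "nat list \<Rightarrow> nat list \<Rightarrow> bool" where
  "lex_less xs ys \<longleftrightarrow> length xs = length ys \<and>
     (\<exists>i<length xs. take i xs = take i ys \<and> xs ! i < ys ! i)"

definition dec_min :: "'v set \<Rightarrow> 'e set \<Rightarrow> ('e \<Rightarrow> 'v \<times> 'v) \<Rightarrow> ('e \<Rightarrow> 'v) \<Rightarrow> bool" where
  "dec_min V E ends h \<longleftrightarrow> orientation E ends h \<and>
     (\<forall>h'. orientation E ends h' \<longrightarrow>
        \<not> lex_less (dec_sorted V (indeg E h')) (dec_sorted V (indeg E h)))"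

definition inc_max :: "'v set \<Rightarrow> 'e set \<Rightarrow> ('e \<Rightarrow> 'v \<times> 'v) \<Rightarrow> ('e \<Rightarrow> 'v) \<Rightarrow> bool" where
  "inc_max V E ends h \<longleftrightarrow> orientation E ends h \<and>
     (\<forall>h'. orientation E ends h' \<longrightarrow>
        \<not> lex_less (inc_sorted V (indeg E h)) (inc_sorted V (indeg E h')))"

end

theory Submission
  imports Defs
begin

definition tl_of :: "('e \<Rightarrow> 'v \<times> 'v) \<Rightarrow> ('e \<Rightarrow> 'v) \<Rightarrow> 'e \<Rightarrow> 'v" where
  "tl_of ends h e = (if h e = fst (ends e) then snd (ends e) else fst (ends e))"

definition rel_of :: "'e set \<Rightarrow> ('e \<Rightarrow> 'v \<times> 'v) \<Rightarrow> ('e \<Rightarrow> 'v) \<Rightarrow> ('v \<times> 'v) set" where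
  "rel_of E ends h = {(tl_of ends h e, h e) | e. e \<in> E}"

definition sq :: "'v set \<Rightarrow> 'e set \<Rightarrow> ('e \<Rightarrow> 'v) \<Rightarrow> nat" where
  "sq V E h = (\<Sum>v\<in>V. (indeg E h v)^2)"

definition ismin :: "'v set \<Rightarrow> 'e set \<Rightarrow> ('e \<Rightarrow> 'v \<times> 'v) \<Rightarrow> ('e \<Rightarrow> 'v) \<Rightarrow> bool" where
  "ismin V E ends h \<longleftrightarrow> orientation E ends h \<and>
     (\<forall>h'. orientation E ends h' \<longrightarrow> sq V E h \<le> sq V E h')"

lemma indeg_sum:
  assumes "finite E" "finite X"
  shows "(\<Sum>v\<in>X. indeg E h v) = card {e\<in>E. h e \<in> X}"
proof -
  have "{e\<in>E. h e \<in> X} = (\<Union>v\<in>X. {e\<in>E. h e = v})" by auto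
  then have "card {e\<in>E. h e \<in> X} = (\<Sum>v\<in>X. card {e\<in>E. h e = v})"
    using assms by (simp, subst card_UN_disjoint) auto
  then show ?thesis by (simp add: indeg_def)
qed

lemma relpow_mono_set:
  fixes r s :: "('a \<times> 'a) set"
  assumes "r \<subseteq> s"
  shows "p \<in> r ^^ n \<Longrightarrow> p \<in> s ^^ n"
proof (induction n arbitrary: p)
  case 0 then show ?case by simp
next
  case (Suc n)
  then show ?case using assms by (cases p) (auto dest!: relpow_Suc_D2 intro: relpow_Suc_I2)
qed

lemma relpow_avoid:
  "(a,b) \<in> r ^^ k \<Longrightarrow> a \<noteq> u \<Longrightarrow>
     (a,b) \<in> (r \<inter> {p. fst p \<noteq> u}) ^^ k \<or> (\<exists>i<k. (u,b) \<in> r ^^ i)"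
  for r :: "('a \<times> 'a) set"
proof (induction k arbitrary: a)
  case 0 then show ?case by simp
next
  case (Suc k)
  from Suc.prems(1) obtain c where ac: "(a,c) \<in> r" and cb: "(c,b) \<in> r ^^ k"
    using relpow_Suc_D2 by metis
  show ?case
  proof (cases "c = u")
    case True then show ?thesis using cb by auto
  next
    case False
    from Suc.IH[OF cb False] show ?thesis
    proof
      assume "(c,b) \<in> (r \<inter> {p. fst p \<noteq> u}) ^^ k"
      then have "(a,b) \<in> (r \<inter> {p. fst p \<noteq> u}) ^^ Suc k"
        using ac Suc.prems(2) by (intro relpow_Suc_I2) auto
      then show ?thesis by blast
    next
      assume "\<exists>i<k. (u,b) \<in> r ^^ i"
      then show ?thesis by (meson less_SucI)
    qed
  qed
qed

lemma flip:
  assumes g: "graph V E ends" and o: "orientation E ends h" and e: "e \<in> E"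
  defines "h1 \<equiv> h(e := tl_of ends h e)"
  shows "orientation E ends h1"
    and "tl_of ends h1 e = h e"
    and "\<And>e'. e' \<noteq> e \<Longrightarrow> tl_of ends h1 e' = tl_of ends h e' \<and> h1 e' = h e'"
    and "indeg E h1 (tl_of ends h e) = Suc (indeg E h (tl_of ends h e))"
    and "indeg E h1 (h e) = indeg E h (h e) - 1"
    and "indeg E h (h e) \<ge> 1"
    and "\<And>v. v \<noteq> h e \<Longrightarrow> v \<noteq> tl_of ends h e \<Longrightarrow> indeg E h1 v = indeg E h v"
    and "tl_of ends h e \<noteq> h e" and "tl_of ends h e \<in> V" and "h e \<in> V"
proof -
  have fE: "finite E" using g by (simp add: graph_def)
  have ee: "fst (ends e) \<in> V" "snd (ends e) \<in> V" "fst (ends e) \<noteq> snd (ends e)"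
    using g e by (auto simp: graph_def)
  have he: "h e = fst (ends e) \<or> h e = snd (ends e)" using o e by (simp add: orientation_def)
  show tn: "tl_of ends h e \<noteq> h e" using ee he by (auto simp: tl_of_def)
  show "tl_of ends h e \<in> V" "h e \<in> V" using ee he by (auto simp: tl_of_def)
  show "orientation E ends h1" using o ee he
    by (auto simp: orientation_def h1_def tl_of_def)
  show "tl_of ends h1 e = h e" using ee he by (auto simp: h1_def tl_of_def)
  show "\<And>e'. e' \<noteq> e \<Longrightarrow> tl_of ends h1 e' = tl_of ends h e' \<and> h1 e' = h e'"
    by (auto simp: h1_def tl_of_def)
  have "{e'\<in>E. h1 e' = tl_of ends h e} = insert e {e'\<in>E. h e' = tl_of ends h e}"
    using e tn by (auto simp: h1_def)
  then show "indeg E h1 (tl_of ends h e) = Suc (indeg E h (tl_of ends h e))"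
    using fE tn by (simp add: indeg_def)
  have "{e'\<in>E. h1 e' = h e} = {e'\<in>E. h e' = h e} - {e}"
    using e tn by (auto simp: h1_def)
  then show "indeg E h1 (h e) = indeg E h (h e) - 1"
    using fE e by (simp add: indeg_def)
  have "e \<in> {e'\<in>E. h e' = h e}" using e by simp
  then show "indeg E h (h e) \<ge> 1" using fE unfolding indeg_def
    by (metis (no_types, lifting) One_nat_def Suc_leI card_gt_0_iff empty_iff finite_subset mem_Collect_eq subsetI)
  show "\<And>v. v \<noteq> h e \<Longrightarrow> v \<noteq> tl_of ends h e \<Longrightarrow> indeg E h1 v = indeg E h v"
    unfolding indeg_def h1_def by (rule arg_cong[where f=card]) auto
qed

lemma sq_flip:
  assumes g: "graph V E ends" and o: "orientation E ends h" and e: "e \<in> E"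
  shows "sq V E (h(e := tl_of ends h e)) + 2 * indeg E h (h e)
         = sq V E h + 2 * indeg E h (tl_of ends h e) + 2"
proof -
  define h1 where "h1 = h(e := tl_of ends h e)"
  define u where "u = tl_of ends h e"
  define x where "x = h e"
  note F = flip[OF g o e, folded h1_def u_def x_def]
  have fV: "finite V" using g by (simp add: graph_def)
  have split: "(\<Sum>v\<in>V. f v) = f u + f x + (\<Sum>v\<in>V-{u}-{x}. f v)" for f :: "'a \<Rightarrow> nat"
  proof -
    have "(\<Sum>v\<in>V. f v) = f u + (\<Sum>v\<in>V-{u}. f v)" using fV F(9) by (simp add: sum.remove)
    also have "(\<Sum>v\<in>V-{u}. f v) = f x + (\<Sum>v\<in>V-{u}-{x}. f v)"
      using fV F(10) F(8) by (subst sum.remove) auto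
    finally show ?thesis by simp
  qed
  have rest: "(\<Sum>v\<in>V-{u}-{x}. (indeg E h1 v)^2) = (\<Sum>v\<in>V-{u}-{x}. (indeg E h v)^2)"
    using F(7) by (intro sum.cong) auto
  obtain a where a: "indeg E h x = Suc a" using F(6) by (cases "indeg E h x") auto
  have "sq V E h1 + 2 * indeg E h x = sq V E h + 2 * indeg E h u + 2"
    unfolding sq_def
    using split[of "\<lambda>v. (indeg E h1 v)^2"] split[of "\<lambda>v. (indeg E h v)^2"] rest F(4) F(5) a
    by (simp add: power2_eq_square algebra_simps)
  then show ?thesis by (simp add: h1_def u_def x_def)
qed

lemma min_step:
  assumes g: "graph V E ends" and m: "ismin V E ends h" and e: "e \<in> E"
  shows "indeg E h (h e) \<le> indeg E h (tl_of ends h e) + 1"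
    and "indeg E h (h e) = indeg E h (tl_of ends h e) + 1 \<Longrightarrow> ismin V E ends (h(e := tl_of ends h e))"
proof -
  have o: "orientation E ends h" using m by (simp add: ismin_def)
  note S = sq_flip[OF g o e]
  have o1: "orientation E ends (h(e := tl_of ends h e))" using flip[OF g o e] by simp
  have le: "sq V E h \<le> sq V E (h(e := tl_of ends h e))" using m o1 by (simp add: ismin_def)
  show "indeg E h (h e) \<le> indeg E h (tl_of ends h e) + 1" using S le by linarith
  assume "indeg E h (h e) = indeg E h (tl_of ends h e) + 1"
  then have "sq V E (h(e := tl_of ends h e)) = sq V E h" using S by linarith
  then show "ismin V E ends (h(e := tl_of ends h e))" using m o1 by (simp add: ismin_def)
qed

lemma walk:
  assumes g: "graph V E ends"
  shows "ismin V E ends h \<Longrightarrow> (u,t) \<in> (rel_of E ends h)^^n \<Longrightarrow> indeg E h t \<le> indeg E h u + 1"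
proof (induction n arbitrary: h u t rule: less_induct)
  case (less n)
  show ?case
  proof (cases "\<exists>i<n. (u,t) \<in> (rel_of E ends h)^^i")
    case True then show ?thesis using less.IH less.prems by blast
  next
    case False
    show ?thesis
    proof (cases n)
      case 0 then show ?thesis using less.prems by simp
    next
      case (Suc k)
      obtain x1 where ux: "(u,x1) \<in> rel_of E ends h" and xt: "(x1,t) \<in> (rel_of E ends h)^^k"
        using less.prems(2) Suc relpow_Suc_D2 by metis
      obtain e where e: "e \<in> E" and ue: "u = tl_of ends h e" and xe: "x1 = h e"
        using ux by (auto simp: rel_of_def)
      have o: "orientation E ends h" using less.prems(1) by (simp add: ismin_def)
      have A: "indeg E h t \<le> indeg E h x1 + 1" using less.IH[OF _ less.prems(1) xt] Suc by simp
      have B: "indeg E h x1 \<le> indeg E h u + 1" using min_step(1)[OF g less.prems(1) e] ue xe by simp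
      show ?thesis
      proof (rule ccontr)
        assume C: "\<not> ?thesis"
        then have eq1: "indeg E h x1 = indeg E h u + 1" and eq2: "indeg E h t = indeg E h u + 2"
          using A B by linarith+
        define h1 where "h1 = h(e := tl_of ends h e)"
        have m1: "ismin V E ends h1" using min_step(2)[OF g less.prems(1) e] eq1 ue xe h1_def by simp
        note F = flip[OF g o e, folded h1_def]
        have xu: "x1 \<noteq> u" using eq1 by auto
        from relpow_avoid[OF xt xu]
        have "(x1,t) \<in> (rel_of E ends h \<inter> {p. fst p \<noteq> u}) ^^ k"
          using False Suc by (meson less_SucI)
        moreover have "rel_of E ends h \<inter> {p. fst p \<noteq> u} \<subseteq> rel_of E ends h1"
        proof
          fix p assume p: "p \<in> rel_of E ends h \<inter> {p. fst p \<noteq> u}"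
          then obtain e' where e': "e' \<in> E" "p = (tl_of ends h e', h e')" by (auto simp: rel_of_def)
          then have "e' \<noteq> e" using p ue by auto
          then show "p \<in> rel_of E ends h1" using F(3)[of e'] e' unfolding rel_of_def by (metis (mono_tags, lifting) mem_Collect_eq)
        qed
        ultimately have xt1: "(x1,t) \<in> (rel_of E ends h1) ^^ k" using relpow_mono_set by blast
        have kn: "k < n" using Suc by simp
        from xt1 have D: "indeg E h1 t \<le> indeg E h1 x1 + 1" by (rule less.IH[OF kn m1])
        have "indeg E h1 x1 = indeg E h u" using F(5) eq1 xe by simp
        moreover have "t \<noteq> x1" "t \<noteq> u" using eq1 eq2 by auto
        then have "indeg E h1 t = indeg E h t"
          using F(7)[of t] ue xe by blast
        ultimately show False using D eq2 by simp
      qed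
    qed
  qed
qed


lemma exists_min:
  assumes g: "graph V E ends"
  obtains h0 where "ismin V E ends h0"
proof -
  let ?P = "\<lambda>s. \<exists>h. orientation E ends h \<and> sq V E h = s"
  have "orientation E ends (\<lambda>e. fst (ends e))" by (simp add: orientation_def)
  then have ex: "\<exists>s. ?P s" by blast
  from LeastI_ex[OF ex] obtain h0 where h0: "orientation E ends h0" "sq V E h0 = (LEAST s. ?P s)"
    by blast
  have "ismin V E ends h0" unfolding ismin_def
  proof (intro conjI allI impI)
    fix h' assume "orientation E ends h'"
    then have "?P (sq V E h')" by blast
    then show "sq V E h0 \<le> sq V E h'" using h0(2) by (simp add: Least_le)
  qed (rule h0(1))
  then show ?thesis using that by blast
qed

lemma sum_indeg_V:
  assumes g: "graph V E ends" and o: "orientation E ends h"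
  shows "(\<Sum>v\<in>V. indeg E h v) = card E"
proof -
  have "{e\<in>E. h e \<in> V} = E" using g o by (auto simp: graph_def orientation_def)
  then show ?thesis using indeg_sum[of E V h] g by (simp add: graph_def)
qed

lemma phi_le:
  assumes g: "graph V E ends" and m: "ismin V E ends h0" and o: "orientation E ends h'"
  shows "(\<Sum>v\<in>V. indeg E h0 v - j) \<le> (\<Sum>v\<in>V. indeg E h' v - j)"
proof -
  have fV: "finite V" and fE: "finite E" using g by (auto simp: graph_def)
  have o0: "orientation E ends h0" using m by (simp add: ismin_def)
  let ?R = "rel_of E ends h0"
  let ?m = "indeg E h0"
  let ?m' = "indeg E h'"
  have W: "(u,t) \<in> ?R\<^sup>* \<Longrightarrow> ?m t \<le> ?m u + 1" for u t
    using walk[OF g m] by (auto simp: rtrancl_power)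
  define X where "X = {u\<in>V. \<exists>t\<in>V. (u,t) \<in> ?R\<^sup>* \<and> ?m t \<ge> Suc j}"
  have XV: "X \<subseteq> V" by (auto simp: X_def)
  have fX: "finite X" using XV fV finite_subset by blast
  have inX: "?m v \<ge> j" if "v \<in> X" for v
  proof -
    have "\<exists>t\<in>V. (v,t) \<in> ?R\<^sup>* \<and> ?m t \<ge> Suc j" using that unfolding X_def by (simp only: mem_Collect_eq)
    then obtain t where "(v,t) \<in> ?R\<^sup>*" "?m t \<ge> Suc j" by (elim bexE conjE)
    then show ?thesis using W[of v t] by linarith
  qed
  have outX: "?m v \<le> j" if "v \<in> V" "v \<notin> X" for v
  proof (rule ccontr)
    assume "\<not> ?m v \<le> j"
    then have "?m v \<ge> Suc j" by simp
    moreover have "(v,v) \<in> ?R\<^sup>*" by simp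
    ultimately have "v \<in> X" unfolding X_def using that(1) by blast
    then show False using that(2) by blast
  qed
  have ends_e: "e \<in> E \<Longrightarrow> (tl_of ends h0 e = fst (ends e) \<and> h0 e = snd (ends e)) \<or>
      (tl_of ends h0 e = snd (ends e) \<and> h0 e = fst (ends e))" for e
    using o0 by (auto simp: orientation_def tl_of_def)
  have closed: "e \<in> E \<Longrightarrow> h0 e \<in> X \<Longrightarrow> tl_of ends h0 e \<in> X" for e
  proof -
    assume e: "e \<in> E" and hx: "h0 e \<in> X"
    have tlV: "tl_of ends h0 e \<in> V" using g e by (auto simp: graph_def tl_of_def)
    have R1: "(tl_of ends h0 e, h0 e) \<in> ?R" using e by (auto simp: rel_of_def)
    have "\<exists>t\<in>V. (h0 e,t) \<in> ?R\<^sup>* \<and> ?m t \<ge> Suc j" using hx unfolding X_def by (simp only: mem_Collect_eq)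
    then obtain t where t: "t \<in> V" "(h0 e,t) \<in> ?R\<^sup>*" "?m t \<ge> Suc j" by (elim bexE conjE)
    have tr: "(tl_of ends h0 e, t) \<in> ?R\<^sup>*" by (rule converse_rtrancl_into_rtrancl[OF R1 t(2)])
    have "tl_of ends h0 e \<in> V \<and> (\<exists>t\<in>V. (tl_of ends h0 e,t) \<in> ?R\<^sup>* \<and> ?m t \<ge> Suc j)"
      by (rule conjI[OF tlV], rule bexI[OF _ t(1)], rule conjI[OF tr t(3)])
    then show ?thesis unfolding X_def by (simp only: mem_Collect_eq)
  qed
  have sub: "{e\<in>E. h0 e \<in> X} \<subseteq> {e\<in>E. h' e \<in> X}"
  proof
    fix e assume "e \<in> {e\<in>E. h0 e \<in> X}"
    then have e: "e \<in> E" "h0 e \<in> X" by auto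
    then have "tl_of ends h0 e \<in> X" using closed by blast
    then have "fst (ends e) \<in> X \<and> snd (ends e) \<in> X" using ends_e[OF e(1)] e(2) by (elim disjE conjE) simp_all
    moreover have "h' e = fst (ends e) \<or> h' e = snd (ends e)" using o e(1) by (simp add: orientation_def)
    ultimately show "e \<in> {e\<in>E. h' e \<in> X}" using e(1) by (elim disjE conjE) simp_all
  qed
  have S1: "(\<Sum>v\<in>X. ?m v) \<le> (\<Sum>v\<in>X. ?m' v)"
    using indeg_sum[OF fE fX, of h0] indeg_sum[OF fE fX, of h'] card_mono[OF _ sub] fE by simp
  have "(\<Sum>v\<in>V. ?m v - j) = (\<Sum>v\<in>X. ?m v - j)"
    using outX XV fV by (intro sum.mono_neutral_right) auto
  also have "int \<dots> = (\<Sum>v\<in>X. int (?m v)) - int j * int (card X)"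
    using inX by (simp add: of_nat_diff sum_subtractf)
  also have "\<dots> \<le> (\<Sum>v\<in>X. int (?m' v)) - int j * int (card X)"
    using S1 by (simp flip: of_nat_sum)
  also have "\<dots> = (\<Sum>v\<in>X. int (?m' v) - int j)" by (simp add: sum_subtractf)
  also have "\<dots> \<le> (\<Sum>v\<in>X. int (?m' v - j))" by (intro sum_mono) auto
  also have "\<dots> = int (\<Sum>v\<in>X. ?m' v - j)" by simp
  also have "(\<Sum>v\<in>X. ?m' v - j) \<le> (\<Sum>v\<in>V. ?m' v - j)"
    using XV fV by (intro sum_mono2) auto
  finally show ?thesis by (simp only: of_nat_le_iff)
qed

lemma psi_le:
  assumes g: "graph V E ends" and m: "ismin V E ends h0" and o: "orientation E ends h'"
  shows "(\<Sum>v\<in>V. j - indeg E h0 v) \<le> (\<Sum>v\<in>V. j - indeg E h' v)"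
proof -
  have o0: "orientation E ends h0" using m by (simp add: ismin_def)
  have key: "int (j - x) = int (x - j) + int j - int x" for x j :: nat by auto
  have eq: "int (\<Sum>v\<in>V. j - indeg E h v) = int (\<Sum>v\<in>V. indeg E h v - j) + int j * int (card V) - int (card E)"
    if "orientation E ends h" for h
  proof -
    have "int (\<Sum>v\<in>V. j - indeg E h v) = (\<Sum>v\<in>V. int (indeg E h v - j) + int j - int (indeg E h v))"
      unfolding of_nat_sum by (rule sum.cong[OF refl key])
    also have "\<dots> = int (\<Sum>v\<in>V. indeg E h v - j) + int j * int (card V) - int (\<Sum>v\<in>V. indeg E h v)"
      by (simp add: sum.distrib sum_subtractf)
    finally show ?thesis using sum_indeg_V[OF g that] by simp
  qed
  have "int (\<Sum>v\<in>V. j - indeg E h0 v) \<le> int (\<Sum>v\<in>V. j - indeg E h' v)"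
    using eq[OF o0] eq[OF o] phi_le[OF g m o, of j] by linarith
  then show ?thesis by (simp only: of_nat_le_iff)
qed

lemma sum_sorted:
  assumes "finite V"
  shows "(\<Sum>v\<in>V. f (m v)) = sum_list (map f (inc_sorted V m))"
    and "(\<Sum>v\<in>V. f (m v)) = sum_list (map f (dec_sorted V m))"
proof -
  have "sum_list (map f (inc_sorted V m)) = sum_mset (image_mset f (mset (inc_sorted V m)))"
    by (simp flip: sum_mset_sum_list)
  also have "\<dots> = (\<Sum>v\<in>V. f (m v))"
    by (simp add: inc_sorted_def sum_unfold_sum_mset image_mset.compositionality comp_def)
  finally show "(\<Sum>v\<in>V. f (m v)) = sum_list (map f (inc_sorted V m))" by simp
  then show "(\<Sum>v\<in>V. f (m v)) = sum_list (map f (dec_sorted V m))"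
    by (simp add: dec_sorted_def rev_map[symmetric] sum_list_rev)
qed

lemma lex_phi_dec:
  fixes xs ys :: "nat list"
  assumes sx: "sorted_wrt (\<ge>) xs" and sy: "sorted_wrt (\<ge>) ys" and l: "lex_less xs ys"
  shows "\<exists>j. sum_list (map (\<lambda>x. x - j) xs) < sum_list (map (\<lambda>x. x - j) ys)"
proof -
  obtain i where i: "i < length xs" "take i xs = take i ys" "xs ! i < ys ! i" and len: "length xs = length ys"
    using l by (auto simp: lex_less_def)
  let ?j = "xs ! i"
  have dx: "xs = take i xs @ xs ! i # drop (Suc i) xs" using i(1) by (rule id_take_nth_drop)
  have dy: "ys = take i ys @ ys ! i # drop (Suc i) ys" using i(1) len by (intro id_take_nth_drop) simp
  have "sorted_wrt (\<ge>) (take i xs @ xs ! i # drop (Suc i) xs)"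
    using sx by (simp only: dx[symmetric])
  then have "\<forall>y\<in>set (drop (Suc i) xs). y \<le> xs ! i"
    by (simp add: sorted_wrt_append)
  then have z: "sum_list (map (\<lambda>x. x - ?j) (drop (Suc i) xs)) = 0" by simp
  have "sum_list (map (\<lambda>x. x - ?j) xs) = sum_list (map (\<lambda>x. x - ?j) (take i xs))"
    using z by (subst dx) simp
  also have "\<dots> < sum_list (map (\<lambda>x. x - ?j) ys)"
    using i(3) by (subst dy) (simp add: i(2))
  finally show ?thesis by blast
qed

lemma lex_psi_inc:
  fixes xs ys :: "nat list"
  assumes sx: "sorted xs" and sy: "sorted ys" and l: "lex_less xs ys"
  shows "\<exists>j. sum_list (map (\<lambda>x. j - x) ys) < sum_list (map (\<lambda>x. j - x) xs)"
proof -
  obtain i where i: "i < length xs" "take i xs = take i ys" "xs ! i < ys ! i" and len: "length xs = length ys"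
    using l by (auto simp: lex_less_def)
  let ?j = "ys ! i"
  have dx: "xs = take i xs @ xs ! i # drop (Suc i) xs" using i(1) by (rule id_take_nth_drop)
  have dy: "ys = take i ys @ ys ! i # drop (Suc i) ys" using i(1) len by (intro id_take_nth_drop) simp
  have "sorted (take i ys @ ys ! i # drop (Suc i) ys)"
    using sy by (simp only: dy[symmetric])
  then have "\<forall>y\<in>set (drop (Suc i) ys). ys ! i \<le> y"
    by (simp add: sorted_append)
  then have z: "sum_list (map (\<lambda>x. ?j - x) (drop (Suc i) ys)) = 0" by simp
  have "sum_list (map (\<lambda>x. ?j - x) ys) = sum_list (map (\<lambda>x. ?j - x) (take i ys))"
    using z by (subst dy) simp
  also have "\<dots> < sum_list (map (\<lambda>x. ?j - x) xs)"
    using i(3) by (subst dx) (simp add: i(2))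
  finally show ?thesis by blast
qed

lemma lex_total:
  assumes "length xs = length ys" "xs \<noteq> ys"
  shows "lex_less xs ys \<or> lex_less ys xs"
proof -
  have "\<exists>i. i < length xs \<and> xs ! i \<noteq> ys ! i" using assms nth_equalityI by blast
  define i where "i = (LEAST i. i < length xs \<and> xs ! i \<noteq> ys ! i)"
  have i: "i < length xs" "xs ! i \<noteq> ys ! i"
    using LeastI_ex[OF \<open>\<exists>i. _\<close>] unfolding i_def by blast+
  have "\<forall>k<i. xs ! k = ys ! k"
  proof (intro allI impI)
    fix k assume "k < i"
    then have "\<not> (k < length xs \<and> xs ! k \<noteq> ys ! k)"
      unfolding i_def by (rule not_less_Least)
    then show "xs ! k = ys ! k" using \<open>k < i\<close> i(1) by simp
  qed
  then have t: "take i xs = take i ys" using i(1) assms(1)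
    by (intro nth_equalityI) auto
  show ?thesis
  proof (cases "xs ! i < ys ! i")
    case True then show ?thesis using i t assms(1) by (auto simp: lex_less_def)
  next
    case False then have "ys ! i < xs ! i" using i(2) by simp
    moreover have "take i ys = take i xs" using t by simp
    ultimately show ?thesis using i(1) assms(1) unfolding lex_less_def by auto
  qed
qed

lemma len_sorted: "length (dec_sorted V m) = length (dec_sorted V m')"
  "length (inc_sorted V m) = length (inc_sorted V m')"
  by (simp_all add: dec_sorted_def inc_sorted_def)
     (metis mset_sorted_list_of_multiset size_mset size_image_mset)+

theorem corollary4p3:
  fixes V :: "'v set" and E :: "'e set" and ends :: "'e \<Rightarrow> 'v \<times> 'v" and h :: "'e \<Rightarrow> 'v"
  assumes "graph V E ends"
    and "orientation E ends h"
  shows "dec_min V E ends h \<longleftrightarrow> inc_max V E ends h"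
proof -
  note g = assms(1)
  have fV: "finite V" using g by (simp add: graph_def)
  obtain h0 where m0: "ismin V E ends h0" using exists_min[OF g] by blast
  have o0: "orientation E ends h0" using m0 by (simp add: ismin_def)
  have gd: "\<not> lex_less (dec_sorted V (indeg E h')) (dec_sorted V (indeg E h0))"
    if o': "orientation E ends h'" for h'
  proof
    assume "lex_less (dec_sorted V (indeg E h')) (dec_sorted V (indeg E h0))"
    moreover have "sorted_wrt (\<ge>) (dec_sorted V m)" for m
      by (simp add: dec_sorted_def inc_sorted_def sorted_wrt_rev)
    ultimately obtain j where
      "sum_list (map (\<lambda>x. x - j) (dec_sorted V (indeg E h'))) < sum_list (map (\<lambda>x. x - j) (dec_sorted V (indeg E h0)))"
      using lex_phi_dec by blast
    then have "(\<Sum>v\<in>V. indeg E h' v - j) < (\<Sum>v\<in>V. indeg E h0 v - j)"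
      using sum_sorted(2)[OF fV, of "\<lambda>x. x - j"] by simp
    then show False using phi_le[OF g m0 o', of j] by simp
  qed
  have gi: "\<not> lex_less (inc_sorted V (indeg E h0)) (inc_sorted V (indeg E h'))"
    if o': "orientation E ends h'" for h'
  proof
    assume "lex_less (inc_sorted V (indeg E h0)) (inc_sorted V (indeg E h'))"
    moreover have "sorted (inc_sorted V m)" for m
      by (simp add: inc_sorted_def)
    ultimately obtain j where
      "sum_list (map (\<lambda>x. j - x) (inc_sorted V (indeg E h'))) < sum_list (map (\<lambda>x. j - x) (inc_sorted V (indeg E h0)))"
      using lex_psi_inc by blast
    then have "(\<Sum>v\<in>V. j - indeg E h' v) < (\<Sum>v\<in>V. j - indeg E h0 v)"
      using sum_sorted(1)[OF fV, of "\<lambda>x. j - x"] by simp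
    then show False using psi_le[OF g m0 o', of j] by simp
  qed
  have ideq: "inc_sorted V (indeg E h) = inc_sorted V (indeg E h0) \<longleftrightarrow>
      dec_sorted V (indeg E h) = dec_sorted V (indeg E h0)"
    by (simp add: dec_sorted_def)
  show ?thesis
  proof
    assume d: "dec_min V E ends h"
    then have "\<not> lex_less (dec_sorted V (indeg E h0)) (dec_sorted V (indeg E h))"
      using o0 by (simp add: dec_min_def)
    then have "dec_sorted V (indeg E h) = dec_sorted V (indeg E h0)"
      using gd[OF assms(2)] lex_total[OF len_sorted(1)] by blast
    then have "inc_sorted V (indeg E h) = inc_sorted V (indeg E h0)" using ideq by simp
    then show "inc_max V E ends h" using gi assms(2) by (simp add: inc_max_def)
  next
    assume d: "inc_max V E ends h"
    then have "\<not> lex_less (inc_sorted V (indeg E h)) (inc_sorted V (indeg E h0))"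
      using o0 by (simp add: inc_max_def)
    then have "inc_sorted V (indeg E h) = inc_sorted V (indeg E h0)"
      using gi[OF assms(2)] lex_total[OF len_sorted(2)] by blast
    then have "dec_sorted V (indeg E h) = dec_sorted V (indeg E h0)" using ideq by simp
    then show "dec_min V E ends h" using gd assms(2) by (simp add: dec_min_def)
  qed
qed

end
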